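(* Let $\pi\colon\mathsf{States}\to\mathbb{R}_{\ge0}$ be a potential function. For every program $C$ of the heap-manipulating probabilistic guarded command language, $$\mathsf{ert}[\![C]\!](0)\;\preceq\;\mathsf{aert}_\pi[\![C]\!](0)+\pi .$$
   Context: States and programs. Fix a finite set $\mathrm{Vars}$ of variables; values are $\mathbb{N}$, locations are $\mathbb{N}_{>0}$. A stack is $s\colon \mathrm{Vars}\to\mathbb{N}$; a heap is a partial map $h$ from a finite set $\mathrm{dom}(h)\subseteq\mathbb{N}_{>0}$ to $\mathbb{N}$. $h_1\perp h_2$ means disjoint domains; then $h_1\star h_2$ is their union; $h_\emptyset$ is the empty heap. $\mathsf{States}$ is the set of pairs $(s,h)$. $s(e)$ is the value of a (heap-independent) arithmetic expression $e$ under $s$, $s\models\varphi$ means the Boolean expression $\varphi$ holds under $s$, $s[x\mapsto v]$ is the updated stack. Programs are generated by $C ::= \mathtt{tick}(e) \mid x:=e \mid x:=\mathtt{alloc}(e) \mid \langle e\rangle:=e' \mid x:=\langle e\rangle \mid \mathtt{free}(e) \mid \{C\}[p]\{C\} \mid \mathtt{if}(\varphi)\{C\}\mathtt{else}\{C\} \mid C;C \mid \mathtt{while}(\varphi)\{C\}$, where $p$ is an expression with $s(p)\in[0,1]\cap\mathbb{Q}$ for all $s$. The statements other than tick, probabilistic choice, conditional, sequencing and loops are called atomic. Runtimes. $\mathbb{T}$ is the set of functions $\mathsf{States}\to[0,\infty]$, ordered pointwise by $\preceq$; arithmetic is pointwise with $0\cdot\infty=0$; $0$ denotes the constant-zero function.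 $[\varphi]$ is the $0/1$-valued Iverson bracket. Truncated subtraction: $a\dot- b=\max(a-b,0)$, $\infty\dot- b=\infty$ for finite $b$, $a\dot-\infty=0$. $(f\oplus g)(s,h)=\min\{f(s,h_1)+g(s,h_2)\mid h=h_1\star h_2\}$; $(f \mathbin{-\!\!\ominus} g)(s,h)=\sup\{g(s,h\star h')\dot- f(s,h')\mid h'\perp h\}$; $(\inf y\colon f)(s,h)=\inf_{v\in\mathbb{N}} f(s[y\mapsto v],h)$, $(\sup y\colon f)(s,h)=\sup_{v\in\mathbb{N}}f(s[y\mapsto v],h)$; $f[x/e](s,h)=f(s[x\mapsto s(e)],h)$. $\mathsf{tm}(e)(s,h)=s(e)$ if $h=h_\emptyset$, else $\infty$; $[e\mapsto e'](s,h)=0$ if $\mathrm{dom}(h)=\{s(e)\}$ and $h(s(e))=s(e')$, else $\infty$; $[e\mapsto -](s,h)=0$ if $\mathrm{dom}(h)=\{s(e)\}$, else $\infty$; $\bigoplus_{i=1}^{e} f_i$ is the separating sum over $i=1,\dots,s(e)$ (empty one: $[\mathsf{emp}]$, which is $0$ if $h=h_\emptyset$, else $\infty$). $\mathsf{ert}[\![C]\!]\colon\mathbb{T}\to\mathbb{T}$ (with $v$ fresh): $\mathsf{ert}[\![\mathtt{tick}(e)]\!](f)=\mathsf{tm}(e)\oplus f$; $\mathsf{ert}[\![x:=e]\!](f)=f[x/e]$; $\mathsf{ert}[\![x:=\mathtt{alloc}(e)]\!](f)=\sup v\colon (\bigoplus_{i=1}^{e}[v+i-1\mapsto 0])\mathbin{-\!\!\ominus}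 f[x/v]$; $\mathsf{ert}[\![\langle e\rangle:=e']\!](f)=[e\mapsto-]\oplus([e\mapsto e']\mathbin{-\!\!\ominus} f)$; $\mathsf{ert}[\![x:=\langle e\rangle]\!](f)=\inf v\colon [e\mapsto v]\oplus([e\mapsto v]\mathbin{-\!\!\ominus} f[x/v])$; $\mathsf{ert}[\![\mathtt{free}(e)]\!](f)=[e\mapsto-]\oplus f$; $\mathsf{ert}[\![C_1;C_2]\!](f)=\mathsf{ert}[\![C_1]\!](\mathsf{ert}[\![C_2]\!](f))$; conditional: $[\varphi]\cdot\mathsf{ert}[\![C_1]\!](f)+[\neg\varphi]\cdot\mathsf{ert}[\![C_2]\!](f)$; probabilistic choice: $p\cdot\mathsf{ert}[\![C_1]\!](f)+(1-p)\cdot\mathsf{ert}[\![C_2]\!](f)$; $\mathsf{ert}[\![\mathtt{while}(\varphi)\{C\}]\!](f)=\mathrm{lfp}\, g.\ [\neg\varphi]\cdot f+[\varphi]\cdot\mathsf{ert}[\![C]\!](g)$. Amortized runtimes. A potential function is $\pi\colon\mathsf{States}\to\mathbb{R}_{\ge0}$. $\mathbb{A}_\pi=\{X\colon\mathsf{States}\to\mathbb{R}\cup\{\infty\}\mid -\pi\le X\}$, ordered pointwise (complete lattice, least element $-\pi$). $\mathsf{aert}_\pi[\![C]\!]\colon\mathbb{A}_\pi\to\mathbb{A}_\pi$: $\mathsf{aert}_\pi[\![\mathtt{tick}(e)]\!](X)=e+X$; for atomic $C$ other than tick, $\mathsf{aert}_\pi[\![C]\!](X)=\mathsf{ert}[\![C]\!](X+\pi)-\pi$;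 sequencing by composition; conditional $[\varphi]\cdot\mathsf{aert}_\pi[\![C_1]\!](X)+[\neg\varphi]\cdot\mathsf{aert}_\pi[\![C_2]\!](X)$; probabilistic choice $p\cdot\mathsf{aert}_\pi[\![C_1]\!](X)+(1-p)\cdot\mathsf{aert}_\pi[\![C_2]\!](X)$; $\mathsf{aert}_\pi[\![\mathtt{while}(\varphi)\{C'\}]\!](X)=\mathrm{lfp}\,Y.\ [\neg\varphi]\cdot X+[\varphi]\cdot\mathsf{aert}_\pi[\![C']\!](Y)$ in $(\mathbb{A}_\pi,\preceq)$. *)

theory Defs
  imports "HOL-Library.Extended_Nonnegative_Real" "HOL-Library.Extended_Real"
begin

type_synonym 'v stack = "'v \<Rightarrow> nat"

typedef heap = "{h :: nat \<rightharpoonup> nat. finite (dom h) \<and> 0 \<notin> dom h}"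
  by (rule exI[of _ Map.empty]) simp

definition hdom :: "heap \<Rightarrow> nat set" where
  "hdom h = dom (Rep_heap h)"

definition hemp :: heap where
  "hemp = Abs_heap Map.empty"

definition hdisj :: "heap \<Rightarrow> heap \<Rightarrow> bool" where
  "hdisj h1 h2 \<longleftrightarrow> hdom h1 \<inter> hdom h2 = {}"

definition hunion :: "heap \<Rightarrow> heap \<Rightarrow> heap" where
  "hunion h1 h2 = Abs_heap (Rep_heap h1 ++ Rep_heap h2)"

type_synonym 'v state = "'v stack \<times> heap"

text \<open>Runtimes (values in [0,\<infinity>]); ennreal has 0 * \<infinity> = 0.\<close>
type_synonym 'v rt = "'v state \<Rightarrow> ennreal"

type_synonym 'v expr = "'v stack \<Rightarrow> nat"
type_synonym 'v bexpr = "'v stack \<Rightarrow> bool"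
type_synonym 'v pexpr = "'v stack \<Rightarrow> rat"

datatype 'v prog =
    Tick "'v expr"
  | Assign 'v "'v expr"
  | Alloc 'v "'v expr"
  | Store "'v expr" "'v expr"
  | Load 'v "'v expr"
  | Free "'v expr"
  | PChoice "'v prog" "'v pexpr" "'v prog"
  | If "'v bexpr" "'v prog" "'v prog"
  | Seq "'v prog" "'v prog"
  | While "'v bexpr" "'v prog"

primrec wf_prog :: "'v prog \<Rightarrow> bool" where
  "wf_prog (Tick e) = True"
| "wf_prog (Assign x e) = True"
| "wf_prog (Alloc x e) = True"
| "wf_prog (Store e e') = True"
| "wf_prog (Load x e) = True"
| "wf_prog (Free e) = True"
| "wf_prog (PChoice C1 p C2) = ((\<forall>s. 0 \<le> p s \<and> p s \<le> 1) \<and> wf_prog C1 \<and> wf_prog C2)"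
| "wf_prog (If b C1 C2) = (wf_prog C1 \<and> wf_prog C2)"
| "wf_prog (Seq C1 C2) = (wf_prog C1 \<and> wf_prog C2)"
| "wf_prog (While b C) = wf_prog C"

definition tsub :: "ennreal \<Rightarrow> ennreal \<Rightarrow> ennreal" where
  "tsub a b = (if b = top then 0 else if a = top then top else a - b)"

definition sepcon :: "'v rt \<Rightarrow> 'v rt \<Rightarrow> 'v rt" where
  "sepcon f g = (\<lambda>(s, h). Inf {f (s, h1) + g (s, h2) | h1 h2.
                                  hdisj h1 h2 \<and> h = hunion h1 h2})"

definition sepimp :: "'v rt \<Rightarrow> 'v rt \<Rightarrow> 'v rt" where
  "sepimp f g = (\<lambda>(s, h). Sup {tsub (g (s, hunion h h')) (f (s, h')) | h'. hdisj h' h})"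

definition tm :: "'v expr \<Rightarrow> 'v rt" where
  "tm e = (\<lambda>(s, h). if h = hemp then of_nat (e s) else top)"

definition pto :: "'v expr \<Rightarrow> 'v expr \<Rightarrow> 'v rt" where
  "pto e e' = (\<lambda>(s, h). if hdom h = {e s} \<and> Rep_heap h (e s) = Some (e' s) then 0 else top)"

definition pto_any :: "'v expr \<Rightarrow> 'v rt" where
  "pto_any e = (\<lambda>(s, h). if hdom h = {e s} then 0 else top)"

definition emp :: "'v rt" where
  "emp = (\<lambda>(s, h). if h = hemp then 0 else top)"

primrec sepsum :: "(nat \<Rightarrow> 'v rt) \<Rightarrow> nat \<Rightarrow> 'v rt" where
  "sepsum fs 0 = emp"
| "sepsum fs (Suc n) = sepcon (sepsum fs n) (fs (Suc n))"

definition sepsum_e :: "(nat \<Rightarrow> 'v rt) \<Rightarrow> 'v expr \<Rightarrow> 'v rt" where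
  "sepsum_e fs e = (\<lambda>(s, h). sepsum fs (e s) (s, h))"

definition subst :: "'v rt \<Rightarrow> 'v \<Rightarrow> 'v expr \<Rightarrow> 'v rt" where
  "subst f x e = (\<lambda>(s, h). f (s(x := e s), h))"

text \<open>The fresh logical variable v is modelled by a meta-level quantified value.\<close>
primrec ert :: "'v prog \<Rightarrow> 'v rt \<Rightarrow> 'v rt" where
  "ert (Tick e) f = sepcon (tm e) f"
| "ert (Assign x e) f = subst f x e"
| "ert (Alloc x e) f = (\<lambda>\<sigma>. SUP v::nat.
      sepimp (sepsum_e (\<lambda>i. pto (\<lambda>_. v + i - 1) (\<lambda>_. 0)) e) (subst f x (\<lambda>_. v)) \<sigma>)"
| "ert (Store e e') f = sepcon (pto_any e) (sepimp (pto e e') f)"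
| "ert (Load x e) f = (\<lambda>\<sigma>. INF v::nat.
      sepcon (pto e (\<lambda>_. v)) (sepimp (pto e (\<lambda>_. v)) (subst f x (\<lambda>_. v))) \<sigma>)"
| "ert (Free e) f = sepcon (pto_any e) f"
| "ert (PChoice C1 p C2) f = (\<lambda>\<sigma>. ennreal (of_rat (p (fst \<sigma>))) * ert C1 f \<sigma>
                                  + ennreal (1 - of_rat (p (fst \<sigma>))) * ert C2 f \<sigma>)"
| "ert (If b C1 C2) f = (\<lambda>\<sigma>. if b (fst \<sigma>) then ert C1 f \<sigma> else ert C2 f \<sigma>)"
| "ert (Seq C1 C2) f = ert C1 (ert C2 f)"
| "ert (While b C) f = lfp (\<lambda>g \<sigma>. if b (fst \<sigma>) then ert C g \<sigma> else f \<sigma>)"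

text \<open>Amortized runtimes: functions into real \<union> {\<infinity>} (modelled in ereal) bounded below by -\<pi>.\<close>
type_synonym 'v art = "'v state \<Rightarrow> ereal"

definition in_A :: "('v state \<Rightarrow> real) \<Rightarrow> 'v art \<Rightarrow> bool" where
  "in_A \<pi> X \<longleftrightarrow> (\<forall>\<sigma>. - ereal (\<pi> \<sigma>) \<le> X \<sigma>)"

definition atomic_aert :: "('v state \<Rightarrow> real) \<Rightarrow> 'v prog \<Rightarrow> 'v art \<Rightarrow> 'v art" where
  "atomic_aert \<pi> C X = (\<lambda>\<sigma>. enn2ereal (ert C (\<lambda>\<sigma>'. e2ennreal (X \<sigma>' + ereal (\<pi> \<sigma>'))) \<sigma>)
                             - ereal (\<pi> \<sigma>))"

text \<open>Least fixed point in the complete lattice A_\<pi> (Knaster-Tarski).\<close>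
definition lfp_A :: "('v state \<Rightarrow> real) \<Rightarrow> ('v art \<Rightarrow> 'v art) \<Rightarrow> 'v art" where
  "lfp_A \<pi> F = Inf {Y. in_A \<pi> Y \<and> F Y \<le> Y}"

primrec aert :: "('v state \<Rightarrow> real) \<Rightarrow> 'v prog \<Rightarrow> 'v art \<Rightarrow> 'v art" where
  "aert \<pi> (Tick e) X = (\<lambda>\<sigma>. ereal (of_nat (e (fst \<sigma>))) + X \<sigma>)"
| "aert \<pi> (Assign x e) X = atomic_aert \<pi> (Assign x e) X"
| "aert \<pi> (Alloc x e) X = atomic_aert \<pi> (Alloc x e) X"
| "aert \<pi> (Store e e') X = atomic_aert \<pi> (Store e e') X"
| "aert \<pi> (Load x e) X = atomic_aert \<pi> (Load x e) X"
| "aert \<pi> (Free e) X = atomic_aert \<pi> (Free e) X"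
| "aert \<pi> (PChoice C1 p C2) X = (\<lambda>\<sigma>. ereal (of_rat (p (fst \<sigma>))) * aert \<pi> C1 X \<sigma>
                                      + ereal (1 - of_rat (p (fst \<sigma>))) * aert \<pi> C2 X \<sigma>)"
| "aert \<pi> (If b C1 C2) X = (\<lambda>\<sigma>. if b (fst \<sigma>) then aert \<pi> C1 X \<sigma> else aert \<pi> C2 X \<sigma>)"
| "aert \<pi> (Seq C1 C2) X = aert \<pi> C1 (aert \<pi> C2 X)"
| "aert \<pi> (While b C) X = lfp_A \<pi> (\<lambda>Y \<sigma>. if b (fst \<sigma>) then aert \<pi> C Y \<sigma> else X \<sigma>)"

end

theory Submission
  imports Defs
begin

lemma tsub_mono: "a \<le> a' \<Longrightarrow> tsub a b \<le> tsub a' b"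
  unfolding tsub_def by (auto simp: ennreal_minus_mono top_unique)

lemma sepcon_mono: "g \<le> g' \<Longrightarrow> sepcon f g \<le> sepcon f g'"
proof (rule le_funI)
  fix \<sigma> :: "'a state"
  assume a: "g \<le> g'"
  obtain s h where [simp]: "\<sigma> = (s, h)" by (cases \<sigma>)
  show "sepcon f g \<sigma> \<le> sepcon f g' \<sigma>"
    unfolding sepcon_def
    apply simp
    apply (rule Inf_mono)
    apply clarify
    subgoal for _ h1 h2
      apply (rule bexI[of _ "f (s, h1) + g (s, h2)"])
      using a by (auto simp: le_fun_def intro: add_left_mono)
    done
qed

lemma sepimp_mono: "g \<le> g' \<Longrightarrow> sepimp f g \<le> sepimp f g'"
proof (rule le_funI)
  fix \<sigma> :: "'a state"
  assume a: "g \<le> g'"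
  obtain s h where [simp]: "\<sigma> = (s, h)" by (cases \<sigma>)
  show "sepimp f g \<sigma> \<le> sepimp f g' \<sigma>"
    unfolding sepimp_def
    apply simp
    apply (rule Sup_mono)
    apply clarify
    subgoal for _ h'
      apply (rule bexI[of _ "tsub (g' (s, hunion h h')) (f (s, h'))"])
      using a by (auto simp: le_fun_def intro: tsub_mono)
    done
qed

lemma subst_mono: "g \<le> g' \<Longrightarrow> subst g x e \<le> subst g' x e"
  unfolding subst_def le_fun_def by auto

lemma ert_mono: "f \<le> g \<Longrightarrow> ert C f \<le> ert C g"
proof (induction C arbitrary: f g)
  case (Tick e) then show ?case by (simp add: sepcon_mono)
next
  case (Assign x e) then show ?case by (simp add: subst_mono)
next
  case (Alloc x e)
  show ?case
  proof (rule le_funI)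
    fix \<sigma> show "ert (Alloc x e) f \<sigma> \<le> ert (Alloc x e) g \<sigma>"
      using Alloc by (simp add: le_funD[OF sepimp_mono] subst_mono SUP_mono')
  qed
next
  case (Store e e') then show ?case by (simp add: sepcon_mono sepimp_mono)
next
  case (Load x e)
  show ?case
  proof (rule le_funI)
    fix \<sigma> show "ert (Load x e) f \<sigma> \<le> ert (Load x e) g \<sigma>"
      using Load by (simp add: le_funD[OF sepcon_mono] sepimp_mono subst_mono INF_mono')
  qed
next
  case (Free e) then show ?case by (simp add: sepcon_mono)
next
  case (PChoice C1 p C2)
  show ?case
  proof (rule le_funI)
    fix \<sigma> show "ert (PChoice C1 p C2) f \<sigma> \<le> ert (PChoice C1 p C2) g \<sigma>"
      using le_funD[OF PChoice.IH(1)[OF PChoice.prems], of \<sigma>] le_funD[OF PChoice.IH(2)[OF PChoice.prems], of \<sigma>]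
      by (simp add: add_mono mult_left_mono)
  qed
next
  case (If b C1 C2) then show ?case by (simp add: le_fun_def)
next
  case (Seq C1 C2) then show ?case by simp
next
  case (While b C)
  show ?case unfolding ert.simps
    apply (rule lfp_mono)
    using While by (simp add: le_fun_def)
qed

lemma inf_shift: "(\<forall>Y\<in>S. a \<le> g Y + ereal c) \<Longrightarrow> a \<le> (INF Y\<in>S. g Y) + ereal c"
  by (simp add: ereal_minus_le[symmetric] le_INF_iff)

lemma shift_nonneg: "- ereal c \<le> y \<Longrightarrow> 0 \<le> y + ereal c"
  by (metis add.commute add.right_inverse add_right_mono plus_ereal.simps(1)
    uminus_ereal.simps(1) zero_ereal_def)

lemma minus_plus_cancel: "(a - ereal c) + ereal c = (a::ereal)"
  by (meson ereal_eq_minus not_infty_ereal)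

lemma pch_real: "0 \<le> p \<Longrightarrow> p \<le> 1 \<Longrightarrow> 0 \<le> x \<Longrightarrow> 0 \<le> y \<Longrightarrow> x \<le> a1 + ereal c \<Longrightarrow> y \<le> a2 + ereal c
  \<Longrightarrow> -ereal c \<le> a1 \<Longrightarrow> -ereal c \<le> a2
  \<Longrightarrow> ereal p * x + ereal (1-p) * y \<le> ereal p * a1 + ereal (1-p) * a2 + ereal c"
  apply (cases a1; cases a2; cases x; cases y)
  apply (auto simp: ereal_mult_infty split: if_splits)
  subgoal for r ra rb rc
    using mult_left_mono[of rb "r+c" p] mult_left_mono[of rc "ra+c" "1-p"]
    by (simp add: algebra_simps)
  done

lemma pch: "0 \<le> p \<Longrightarrow> p \<le> 1 \<Longrightarrow> enn2ereal A \<le> a1 + ereal c \<Longrightarrow> enn2ereal B \<le> a2 + ereal c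
  \<Longrightarrow> -ereal c \<le> a1 \<Longrightarrow> -ereal c \<le> a2
  \<Longrightarrow> enn2ereal (ennreal p * A + ennreal (1-p) * B) \<le> ereal p * a1 + ereal (1-p) * a2 + ereal c"
  using pch_real[of p "enn2ereal A" "enn2ereal B" a1 c a2]
  by (simp add: plus_ennreal.rep_eq times_ennreal.rep_eq)

lemma atomic_bound:
  assumes X: "in_A \<pi> X" and f: "\<forall>\<sigma>. enn2ereal (f \<sigma>) \<le> X \<sigma> + ereal (\<pi> \<sigma>)"
  shows "enn2ereal (ert C f \<sigma>) \<le> atomic_aert \<pi> C X \<sigma> + ereal (\<pi> \<sigma>)"
proof -
  let ?g = "\<lambda>\<sigma>'. e2ennreal (X \<sigma>' + ereal (\<pi> \<sigma>'))"
  have "f \<le> ?g"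
  proof (rule le_funI)
    fix \<sigma>' show "f \<sigma>' \<le> ?g \<sigma>'"
      using e2ennreal_mono[OF f[rule_format, of \<sigma>']] by simp
  qed
  then have "ert C f \<sigma> \<le> ert C ?g \<sigma>" by (rule le_funD[OF ert_mono])
  then have "enn2ereal (ert C f \<sigma>) \<le> enn2ereal (ert C ?g \<sigma>)"
    by (simp add: less_eq_ennreal.rep_eq)
  then show ?thesis unfolding atomic_aert_def minus_plus_cancel .
qed

lemma pch_lb: "0 \<le> p \<Longrightarrow> p \<le> 1 \<Longrightarrow> -ereal c \<le> a1 \<Longrightarrow> -ereal c \<le> a2
  \<Longrightarrow> -ereal c \<le> ereal p * a1 + ereal (1-p) * a2"
  apply (cases a1; cases a2)
  apply (auto simp: ereal_mult_infty split: if_splits)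
  subgoal for r ra
    using mult_left_mono[of "-c" r p] mult_left_mono[of "-c" ra "1-p"]
    by (simp add: algebra_simps)
  done

lemma atomic_in_A: "in_A \<pi> (atomic_aert \<pi> C X)"
  unfolding in_A_def atomic_aert_def
proof
  fix \<sigma>
  have "0 - ereal (\<pi> \<sigma>) \<le> enn2ereal (ert C (\<lambda>\<sigma>'. e2ennreal (X \<sigma>' + ereal (\<pi> \<sigma>'))) \<sigma>) - ereal (\<pi> \<sigma>)"
    by (rule ereal_minus_mono) simp_all
  then show "- ereal (\<pi> \<sigma>) \<le> enn2ereal (ert C (\<lambda>\<sigma>'. e2ennreal (X \<sigma>' + ereal (\<pi> \<sigma>'))) \<sigma>) - ereal (\<pi> \<sigma>)"
    by simp
qed

lemma aert_in_A: "wf_prog C \<Longrightarrow> in_A \<pi> X \<Longrightarrow> in_A \<pi> (aert \<pi> C X)"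
proof (induction C arbitrary: X)
  case (Tick e)
  then show ?case unfolding in_A_def
    by (simp add: add_increasing)
next
  case (PChoice C1 p C2)
  show ?case unfolding in_A_def
  proof
    fix \<sigma> :: "_ \<times> heap"
    have p: "0 \<le> real_of_rat (p (fst \<sigma>))" "real_of_rat (p (fst \<sigma>)) \<le> 1"
      using PChoice.prems(1) by (auto simp: zero_le_of_rat_iff of_rat_le_1_iff)
    have a1: "- ereal (\<pi> \<sigma>) \<le> aert \<pi> C1 X \<sigma>"
      using PChoice.IH(1)[of X] PChoice.prems by (simp add: in_A_def del: uminus_ereal.simps split_paired_All)
    have a2: "- ereal (\<pi> \<sigma>) \<le> aert \<pi> C2 X \<sigma>"
      using PChoice.IH(2)[of X] PChoice.prems by (simp add: in_A_def del: uminus_ereal.simps split_paired_All)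
    show "- ereal (\<pi> \<sigma>) \<le> aert \<pi> (PChoice C1 p C2) X \<sigma>"
      using pch_lb[OF p a1 a2] by simp
  qed
next
  case (If b C1 C2)
  then show ?case by (auto simp: in_A_def)
next
  case (Seq C1 C2)
  then show ?case by simp
next
  case (While b C)
  show ?case unfolding aert.simps lfp_A_def
    apply (subst in_A_def)
    unfolding Inf_apply
    apply (intro allI INF_greatest)
    by (metis (mono_tags, lifting) in_A_def mem_Collect_eq)
qed (simp_all add: atomic_in_A)

lemma main:
  "wf_prog C \<Longrightarrow> in_A \<pi> X \<Longrightarrow> (\<forall>\<sigma>. enn2ereal (f \<sigma>) \<le> X \<sigma> + ereal (\<pi> \<sigma>))
   \<Longrightarrow> enn2ereal (ert C f \<sigma>) \<le> aert \<pi> C X \<sigma> + ereal (\<pi> \<sigma>)"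
proof (induction C arbitrary: f X \<sigma>)
  case (Tick e)
  obtain s h where sh: "\<sigma> = (s, h)" by (cases \<sigma>)
  have hu: "hunion hemp h = h"
    unfolding hunion_def hemp_def
    by (simp add: Abs_heap_inverse Rep_heap_inverse)
  have hd: "hdisj hemp h"
    unfolding hdisj_def hdom_def hemp_def by (simp add: Abs_heap_inverse)
  have "sepcon (tm e) f (s, h) \<le> tm e (s, hemp) + f (s, h)"
    unfolding sepcon_def
    apply simp
    apply (rule Inf_lower)
    using hu hd by force
  also have "\<dots> = of_nat (e s) + f (s, h)" by (simp add: tm_def)
  finally have "enn2ereal (sepcon (tm e) f (s, h)) \<le> enn2ereal (of_nat (e s) + f (s, h))"
    by (simp add: less_eq_ennreal.rep_eq)
  also have "\<dots> = ereal (of_nat (e s)) + enn2ereal (f (s, h))"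
    by (simp add: plus_ennreal.rep_eq)
  also have "\<dots> \<le> ereal (of_nat (e s)) + (X (s, h) + ereal (\<pi> (s, h)))"
    using Tick.prems(3) by (simp add: add_left_mono)
  finally show ?case using sh by (simp add: add.assoc)
next
  case (Assign x e) show ?case using atomic_bound[OF Assign.prems(2,3), of "Assign x e" \<sigma>] by (simp only: aert.simps)
next
  case (Alloc x e) show ?case using atomic_bound[OF Alloc.prems(2,3), of "Alloc x e" \<sigma>] by (simp only: aert.simps)
next
  case (Store e e') show ?case using atomic_bound[OF Store.prems(2,3), of "Store e e'" \<sigma>] by (simp only: aert.simps)
next
  case (Load x e) show ?case using atomic_bound[OF Load.prems(2,3), of "Load x e" \<sigma>] by (simp only: aert.simps)
next
  case (Free e) show ?case using atomic_bound[OF Free.prems(2,3), of "Free e" \<sigma>] by (simp only: aert.simps)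
next
  case (PChoice C1 p C2)
  have p: "0 \<le> real_of_rat (p (fst \<sigma>))" "real_of_rat (p (fst \<sigma>)) \<le> 1"
    using PChoice.prems(1) by (auto simp: zero_le_of_rat_iff of_rat_le_1_iff)
  have A1: "in_A \<pi> (aert \<pi> C1 X)" "in_A \<pi> (aert \<pi> C2 X)"
    using PChoice.prems aert_in_A by auto
  have w: "wf_prog C1" "wf_prog C2" using PChoice.prems(1) by auto
  have l1: "- ereal (\<pi> \<sigma>) \<le> aert \<pi> C1 X \<sigma>" using A1(1)[unfolded in_A_def] by blast
  have l2: "- ereal (\<pi> \<sigma>) \<le> aert \<pi> C2 X \<sigma>" using A1(2)[unfolded in_A_def] by blast
  show ?case
    using pch[OF p PChoice.IH(1)[OF w(1) PChoice.prems(2,3)] PChoice.IH(2)[OF w(2) PChoice.prems(2,3)] l1 l2]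
    by simp
next
  case (If b C1 C2) then show ?case by simp
next
  case (Seq C1 C2)
  have "in_A \<pi> (aert \<pi> C2 X)" using Seq.prems aert_in_A by auto
  moreover have "\<forall>\<sigma>. enn2ereal (ert C2 f \<sigma>) \<le> aert \<pi> C2 X \<sigma> + ereal (\<pi> \<sigma>)"
    using Seq by auto
  ultimately show ?case using Seq.IH(1)[of "aert \<pi> C2 X" "ert C2 f" \<sigma>] Seq.prems by simp
next
  case (While b C)
  define F where "F = (\<lambda>Y \<sigma>. if b (fst \<sigma>) then aert \<pi> C Y \<sigma> else X \<sigma>)"
  define S where "S = {Y. in_A \<pi> Y \<and> F Y \<le> Y}"
  define \<Phi> where "\<Phi> = (\<lambda>g \<sigma>. if b (fst \<sigma>) then ert C g \<sigma> else f \<sigma>)"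
  have "enn2ereal (lfp \<Phi> \<sigma>) \<le> Y \<sigma> + ereal (\<pi> \<sigma>)" if Y: "Y \<in> S" for Y
  proof -
    define Z where "Z = (\<lambda>\<sigma>. e2ennreal (Y \<sigma> + ereal (\<pi> \<sigma>)))"
    have YA: "in_A \<pi> Y" and FY: "F Y \<le> Y" using Y by (auto simp: S_def)
    have Z: "enn2ereal (Z \<sigma>') = Y \<sigma>' + ereal (\<pi> \<sigma>')" for \<sigma>'
      unfolding Z_def
      by (rule enn2ereal_e2ennreal, rule shift_nonneg) (use YA in_A_def in metis)
    have "\<Phi> Z \<le> Z"
    proof (rule le_funI)
      fix \<sigma>'
      have "enn2ereal (\<Phi> Z \<sigma>') \<le> Y \<sigma>' + ereal (\<pi> \<sigma>')"
      proof (cases "b (fst \<sigma>')")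
        case True
        have "enn2ereal (ert C Z \<sigma>') \<le> aert \<pi> C Y \<sigma>' + ereal (\<pi> \<sigma>')"
          using While.IH[of Y Z \<sigma>'] While.prems YA Z by simp
        also have "\<dots> \<le> Y \<sigma>' + ereal (\<pi> \<sigma>')"
          using le_funD[OF FY, of \<sigma>'] True by (simp add: F_def add_right_mono)
        finally show ?thesis using True by (simp add: \<Phi>_def)
      next
        case False
        have "enn2ereal (f \<sigma>') \<le> X \<sigma>' + ereal (\<pi> \<sigma>')" using While.prems(3) by blast
        also have "\<dots> \<le> Y \<sigma>' + ereal (\<pi> \<sigma>')"
          using le_funD[OF FY, of \<sigma>'] False by (simp add: F_def add_right_mono)
        finally show ?thesis using False by (simp add: \<Phi>_def)
      qed
      then show "\<Phi> Z \<sigma>' \<le> Z \<sigma>'" by (simp add: less_eq_ennreal.rep_eq Z)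
    qed
    then have "lfp \<Phi> \<le> Z" by (rule lfp_lowerbound)
    then have "enn2ereal (lfp \<Phi> \<sigma>) \<le> enn2ereal (Z \<sigma>)"
      using le_funD less_eq_ennreal.rep_eq by metis
    then show ?thesis by (simp add: Z)
  qed
  then have "enn2ereal (lfp \<Phi> \<sigma>) \<le> (INF Y\<in>S. Y \<sigma>) + ereal (\<pi> \<sigma>)"
    by (intro inf_shift) auto
  moreover have "aert \<pi> (While b C) X \<sigma> = (INF Y\<in>S. Y \<sigma>)"
    by (simp add: lfp_A_def S_def F_def Inf_apply)
  moreover have "ert (While b C) f = lfp \<Phi>" by (simp add: \<Phi>_def)
  ultimately show ?case by simp
qed

theorem mainTheorem2:
  fixes \<pi> :: "('v::finite) state \<Rightarrow> real" and C :: "'v prog"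
  assumes "\<forall>\<sigma>. 0 \<le> \<pi> \<sigma>"
    and "wf_prog C"
  shows "\<forall>\<sigma>. enn2ereal (ert C (\<lambda>_. 0) \<sigma>) \<le> aert \<pi> C (\<lambda>_. 0) \<sigma> + ereal (\<pi> \<sigma>)"
proof
  fix \<sigma>
  have "in_A \<pi> (\<lambda>_. 0)" using assms(1) by (simp add: in_A_def)
  then show "enn2ereal (ert C (\<lambda>_. 0) \<sigma>) \<le> aert \<pi> C (\<lambda>_. 0) \<sigma> + ereal (\<pi> \<sigma>)"
    using main[OF assms(2), of \<pi> "\<lambda>_. 0" "\<lambda>_. 0" \<sigma>] assms(1) by (simp add: zero_ennreal.rep_eq)
qed

end
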